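(* Let $(\mathscr{D},b)$ be a finite bilinear form with $(\mathscr{D},b)\cong(\mathscr{D},-b)$, and let $\sigma\in\{0,4\}$. Then, up to isomorphism, there is at most one finite quadratic form $(\mathscr{D},q)$ such that $q$ refines $b$, $(\mathscr{D},q)\cong(\mathscr{D},-q)$, and $\tau_1(q)/|\tau_1(q)|=e^{2\pi i\sigma/8}$, where $\tau_1(q)=\sum_{x\in\mathscr{D}}e^{2\pi i q(x)}$.
   Context: A finite bilinear form $(\mathscr{D},b)$ is a finite abelian group $\mathscr{D}$ with a symmetric, bilinear, non-degenerate map $b:\mathscr{D}\times\mathscr{D}\to\mathbb{Q}/\mathbb{Z}$. A finite quadratic form $(\mathscr{D},q)$ is a map $q:\mathscr{D}\to\mathbb{Q}/\mathbb{Z}$ with $q(nx)=n^2q(x)$ for all $n\in\mathbb{Z}$ and $q(x+y)-q(x)-q(y)$ a non-degenerate symmetric bilinear form; $q$ refines $b$ if $q(x+y)-q(x)-q(y)=b(x,y)$ for all $x,y$. Two forms (bilinear or quadratic) on $\mathscr{D}$ and $\mathscr{D}'$ are isomorphic if they are related by precomposition with a group isomorphism $\mathscr{D}\to\mathscr{D}'$. *)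

theory Defs
  imports Complex_Main
begin

text \<open>Values in Q/Z are represented by rational representatives; all conditions
are stated modulo the integers. The finite abelian group D is a finite type
of class ab_group_add.\<close>

definition qz_eq :: "rat \<Rightarrow> rat \<Rightarrow> bool" where
  "qz_eq r s \<longleftrightarrow> r - s \<in> \<int>"

definition zmul :: "int \<Rightarrow> 'a::ab_group_add \<Rightarrow> 'a" where
  "zmul n x = (if 0 \<le> n then (((+) x) ^^ nat n) 0 else - ((((+) x) ^^ nat (- n)) 0))"

definition sym_bilinear_nondeg :: "('a::{finite,ab_group_add} \<Rightarrow> 'a \<Rightarrow> rat) \<Rightarrow> bool" where
  "sym_bilinear_nondeg b \<longleftrightarrow>
     (\<forall>x y. qz_eq (b x y) (b y x)) \<and>
     (\<forall>x y z. qz_eq (b (x + y) z) (b x z + b y z)) \<and>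
     (\<forall>x. (\<forall>y. qz_eq (b x y) 0) \<longrightarrow> x = 0)"

definition finite_bilinear_form :: "('a::{finite,ab_group_add} \<Rightarrow> 'a \<Rightarrow> rat) \<Rightarrow> bool" where
  "finite_bilinear_form b \<longleftrightarrow> sym_bilinear_nondeg b"

definition assoc_bilinear :: "('a::ab_group_add \<Rightarrow> rat) \<Rightarrow> 'a \<Rightarrow> 'a \<Rightarrow> rat" where
  "assoc_bilinear q x y = q (x + y) - q x - q y"

definition finite_quadratic_form :: "('a::{finite,ab_group_add} \<Rightarrow> rat) \<Rightarrow> bool" where
  "finite_quadratic_form q \<longleftrightarrow>
     (\<forall>n x. qz_eq (q (zmul n x)) (of_int (n^2) * q x)) \<and>
     sym_bilinear_nondeg (assoc_bilinear q)"

definition refines :: "('a::ab_group_add \<Rightarrow> rat) \<Rightarrow> ('a \<Rightarrow> 'a \<Rightarrow> rat) \<Rightarrow> bool" where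
  "refines q b \<longleftrightarrow> (\<forall>x y. qz_eq (assoc_bilinear q x y) (b x y))"

definition group_iso :: "('a::ab_group_add \<Rightarrow> 'b::ab_group_add) \<Rightarrow> bool" where
  "group_iso f \<longleftrightarrow> bij f \<and> (\<forall>x y. f (x + y) = f x + f y)"

definition bil_iso :: "('a::ab_group_add \<Rightarrow> 'a \<Rightarrow> rat) \<Rightarrow> ('a \<Rightarrow> 'a \<Rightarrow> rat) \<Rightarrow> bool" where
  "bil_iso b b' \<longleftrightarrow> (\<exists>f::'a \<Rightarrow> 'a. group_iso f \<and> (\<forall>x y. qz_eq (b' (f x) (f y)) (b x y)))"

definition quad_iso :: "('a::ab_group_add \<Rightarrow> rat) \<Rightarrow> ('a \<Rightarrow> rat) \<Rightarrow> bool" where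
  "quad_iso q q' \<longleftrightarrow> (\<exists>f::'a \<Rightarrow> 'a. group_iso f \<and> (\<forall>x. qz_eq (q' (f x)) (q x)))"

definition tau1 :: "('a::finite \<Rightarrow> rat) \<Rightarrow> complex" where
  "tau1 q = (\<Sum>x\<in>UNIV. exp (2 * of_real pi * \<i> * of_rat (q x)))"

end

theory Submission
  imports Defs
begin

definition ee :: "rat \<Rightarrow> complex" where
  "ee r = exp (2 * of_real pi * \<i> * of_rat r)"

lemma ee_of_real: "(of_rat r :: complex) = of_real (of_rat r)"
  by (cases r) (simp add: of_rat_rat)

lemma ee_add: "ee (r + s) = ee r * ee s"
  unfolding ee_def by (simp add: of_rat_add distrib_left exp_add[symmetric] algebra_simps)

lemma ee_cis: "ee r = cis (2 * pi * of_rat r)"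
  unfolding ee_def cis_conv_exp by (simp add: ee_of_real mult_ac)

lemma ee_one_iff: "ee r = 1 \<longleftrightarrow> r \<in> \<int>"
proof -
  have "ee r = 1 \<longleftrightarrow> cos (2 * pi * of_rat r) = 1 \<and> sin (2 * pi * of_rat r) = 0"
    unfolding ee_cis complex_eq_iff by simp
  also have "\<dots> \<longleftrightarrow> cos (2 * pi * of_rat r) = 1"
  proof
    assume c: "cos (2 * pi * of_rat r) = 1"
    have "(sin (2 * pi * of_rat r))^2 = 0" using sin_cos_squared_add[of "2 * pi * of_rat r"] c by simp
    then show "cos (2 * pi * of_rat r) = 1 \<and> sin (2 * pi * of_rat r) = 0" using c by simp
  qed simp
  also have "\<dots> \<longleftrightarrow> (\<exists>n::int. (of_rat r :: real) = of_int n)"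
    by (simp add: cos_one_2pi_int)
  also have "\<dots> \<longleftrightarrow> (\<exists>n::int. r = of_int n)"
    by (metis of_rat_eq_iff of_rat_of_int_eq)
  also have "\<dots> \<longleftrightarrow> r \<in> \<int>" by (auto elim: Ints_cases)
  finally show ?thesis .
qed

lemma ee_norm: "cmod (ee r) = 1"
  unfolding ee_cis by simp

lemma ee_qz: "qz_eq r s \<Longrightarrow> ee r = ee s"
proof -
  assume "qz_eq r s"
  then have "ee (r - s) = 1" by (simp add: qz_eq_def ee_one_iff)
  moreover have "ee r = ee (r - s) * ee s" by (simp flip: ee_add)
  ultimately show ?thesis by simp
qed

lemma qz_sym: "qz_eq r s \<Longrightarrow> qz_eq s r"
  unfolding qz_eq_def by (metis Ints_minus minus_diff_eq)

lemma qz_trans: "qz_eq r s \<Longrightarrow> qz_eq s t \<Longrightarrow> qz_eq r t"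
  unfolding qz_eq_def by (metis Ints_add diff_add_cancel add_diff_eq)

lemma half_lemma:
  fixes r s :: rat
  assumes "2 * r \<in> \<int>" "2 * s \<in> \<int>" "r \<notin> \<int>" "s \<notin> \<int>"
  shows "r + s \<in> \<int>"
proof -
  obtain m where m: "2 * r = of_int m" using assms(1) by (auto elim: Ints_cases)
  obtain n where n: "2 * s = of_int n" using assms(2) by (auto elim: Ints_cases)
  have "odd m"
  proof
    assume "even m" then obtain k where "m = 2*k" by auto
    then have "r = of_int k" using m by simp
    then show False using assms(3) by simp
  qed
  have "odd n"
  proof
    assume "even n" then obtain k where "n = 2*k" by auto
    then have "s = of_int k" using n by simp
    then show False using assms(4) by simp
  qed
  then have "even (m + n)" using \<open>odd m\<close> by simp
  then obtain k where k: "m + n = 2*k" by (metis evenE)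
  have "2*(r+s) = 2 * of_int k" using m n k by (simp add: algebra_simps flip: of_int_add)
  then have "r + s = of_int k" by simp
  then show ?thesis by simp
qed

definition addqz :: "('a::ab_group_add \<Rightarrow> rat) \<Rightarrow> bool" where
  "addqz h \<longleftrightarrow> (\<forall>x y. qz_eq (h (x+y)) (h x + h y))"

lemma addqz_zero: "addqz h \<Longrightarrow> h 0 \<in> \<int>"
  unfolding addqz_def qz_eq_def by (metis add_0 diff_add_cancel diff_self cancel_comm_monoid_add_class.diff_cancel
      add_diff_cancel_left' minus_diff_eq Ints_minus)

lemma char_sum_zero:
  fixes h :: "'a::{finite,ab_group_add} \<Rightarrow> rat"
  assumes "addqz h" and "h y0 \<notin> \<int>"
  shows "(\<Sum>y\<in>UNIV. ee (h y)) = 0"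
proof -
  let ?S = "(\<Sum>y\<in>UNIV. ee (h y))"
  have "(\<Sum>y\<in>UNIV. ee (h (y + y0))) = ?S"
    by (rule sum.reindex_bij_witness[of _ "\<lambda>y. y - y0" "\<lambda>y. y + y0"]) auto
  moreover have "\<And>y. ee (h (y + y0)) = ee (h y) * ee (h y0)"
    using assms(1) unfolding addqz_def by (metis ee_qz ee_add)
  ultimately have "?S * ee (h y0) = ?S" by (simp add: sum_distrib_right)
  moreover have "ee (h y0) \<noteq> 1" using assms(2) ee_one_iff by simp
  ultimately show ?thesis
    by (metis mult.right_neutral mult_left_cancel)
qed

lemma char_sum_triv:
  fixes h :: "'a::{finite,ab_group_add} \<Rightarrow> rat"
  assumes "\<And>y. h y \<in> \<int>"
  shows "(\<Sum>y\<in>UNIV. ee (h y)) = of_nat (card (UNIV :: 'a set))"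
proof -
  have "\<And>y. ee (h y) = 1" using assms by (simp add: ee_one_iff)
  then show ?thesis by simp
qed


lemma tau_ee: "tau1 q = (\<Sum>x\<in>UNIV. ee (q x))"
  by (simp add: tau1_def ee_def)

lemma zmul2: "zmul 2 x = x + x"
  by (simp add: zmul_def numeral_2_eq_2)

lemma zmul0: "zmul 0 x = 0"
  by (simp add: zmul_def)

lemma quad_zero:
  assumes "finite_quadratic_form q" shows "q 0 \<in> \<int>"
proof -
  have "qz_eq (q (zmul 0 0)) (of_int (0^2) * q 0)"
    using assms unfolding finite_quadratic_form_def by blast
  then show ?thesis by (simp add: zmul0 qz_eq_def)
qed

lemma quad_two:
  assumes "finite_quadratic_form q" "refines q b"
  shows "2 * q x - b x x \<in> \<int>"
proof -
  have "qz_eq (q (zmul 2 x)) (of_int (2^2) * q x)"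
    using assms unfolding finite_quadratic_form_def by blast
  then have h1: "q (x + x) - 4 * q x \<in> \<int>" by (simp add: zmul2 qz_eq_def)
  have h2: "q (x + x) - q x - q x - b x x \<in> \<int>"
    using assms(2) unfolding refines_def qz_eq_def assoc_bilinear_def by blast
  have "2 * q x - b x x = (q (x + x) - q x - q x - b x x) - (q (x + x) - 4 * q x)"
    by (simp add: algebra_simps)
  then show ?thesis using h1 h2 by (metis Ints_diff)
qed

lemma exists_c:
  fixes b :: "'a::{finite,ab_group_add} \<Rightarrow> 'a \<Rightarrow> rat" and d :: "'a \<Rightarrow> rat"
  assumes sbn: "sym_bilinear_nondeg b" and ad: "addqz d"
  shows "\<exists>c. \<forall>y. qz_eq (d y) (b y c)"
proof (rule ccontr)
  assume "\<not> ?thesis"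
  then have nc: "\<And>c. \<exists>y. \<not> qz_eq (d y) (b y c)" by blast
  have bs: "\<And>x y. b x y - b y x \<in> \<int>" and
       bl: "\<And>x y z. b (x + y) z - (b x z + b y z) \<in> \<int>" and
       bn: "\<And>x. (\<forall>y. b x y \<in> \<int>) \<Longrightarrow> x = 0"
    using sbn unfolding sym_bilinear_nondeg_def qz_eq_def by auto
  have da: "\<And>x y. d (x + y) - (d x + d y) \<in> \<int>" using ad unfolding addqz_def qz_eq_def by blast
  have inner0: "(\<Sum>y\<in>UNIV. ee (d y - b y z)) = 0" for z
  proof -
    obtain y0 where "\<not> qz_eq (d y0) (b y0 z)" using nc by blast
    then have y0: "d y0 - b y0 z \<notin> \<int>" by (simp add: qz_eq_def)
    have "addqz (\<lambda>y. d y - b y z)"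
      unfolding addqz_def qz_eq_def
    proof (intro allI)
      fix x y
      have "d (x + y) - b (x + y) z - (d x - b x z + (d y - b y z))
            = (d (x + y) - (d x + d y)) - (b (x + y) z - (b x z + b y z))"
        by (simp add: algebra_simps)
      then show "d (x + y) - b (x + y) z - (d x - b x z + (d y - b y z)) \<in> \<int>"
        using da bl by (metis Ints_diff)
    qed
    then show ?thesis using char_sum_zero y0 by blast
  qed
  have inner: "(\<Sum>z\<in>UNIV. ee (- b y z)) = (if y = 0 then of_nat (card (UNIV :: 'a set)) else 0)" for y
  proof (cases "y = 0")
    case True
    have "b 0 z \<in> \<int>" for z
    proof -
      have "b 0 z = - (b (0 + 0) z - (b 0 z + b 0 z))" by simp
      then show ?thesis using bl by (metis Ints_minus)
    qed
    then show ?thesis using True char_sum_triv[of "\<lambda>z. - b 0 z"] by simp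
  next
    case False
    then obtain z0 where z0: "b y z0 \<notin> \<int>" using bn by blast
    have az: "addqz (\<lambda>z. - b y z)"
      unfolding addqz_def qz_eq_def
    proof (intro allI)
      fix z w
      have "- b y (z + w) - (- b y z + - b y w) =
            (b (z + w) y - b y (z + w)) - (b (z + w) y - (b z y + b w y)) - (b z y - b y z) - (b w y - b y w)"
        by (simp add: algebra_simps)
      then show "- b y (z + w) - (- b y z + - b y w) \<in> \<int>"
        using bs bl by (metis Ints_diff)
    qed
    moreover have z1: "- b y z0 \<notin> \<int>" using z0 by (metis Ints_minus minus_minus)
    show ?thesis using False char_sum_zero[OF az z1] by simp
  qed
  have "0 = (\<Sum>z\<in>UNIV. \<Sum>y\<in>UNIV. ee (d y - b y z))" using inner0 by simp
  also have "\<dots> = (\<Sum>y\<in>UNIV. \<Sum>z\<in>UNIV. ee (d y) * ee (- b y z))"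
    by (subst sum.swap) (simp add: ee_add[symmetric])
  also have "\<dots> = (\<Sum>y\<in>UNIV. ee (d y) * (\<Sum>z\<in>UNIV. ee (- b y z)))"
    by (simp add: sum_distrib_left)
  also have "\<dots> = (\<Sum>y\<in>UNIV. (if (y::'a) = 0 then ee (d 0) * of_nat (card (UNIV :: 'a set)) else 0))"
  proof -
    have "ee (d y) * (\<Sum>z\<in>UNIV. ee (- b y z)) = (if y = 0 then ee (d 0) * of_nat (card (UNIV :: 'a set)) else 0)" for y
      using inner[of y] by simp
    then show ?thesis by (intro sum.cong) auto
  qed
  also have "\<dots> = ee (d 0) * of_nat (card (UNIV :: 'a set))" by simp
  also have "\<dots> = of_nat (card (UNIV :: 'a set))" using addqz_zero[OF ad] by (simp add: ee_one_iff)
  finally show False by simp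
qed


theorem proposition6:
  fixes b :: "'a::{finite,ab_group_add} \<Rightarrow> 'a \<Rightarrow> rat" and \<sigma> :: real
  assumes "finite_bilinear_form b"
    and "bil_iso b (\<lambda>x y. - b x y)"
    and "\<sigma> = 0 \<or> \<sigma> = 4"
  shows "\<forall>q1 q2. (finite_quadratic_form q1 \<and> refines q1 b \<and> quad_iso q1 (\<lambda>x. - q1 x) \<and>
                   tau1 q1 / of_real (cmod (tau1 q1)) = exp (2 * of_real pi * \<i> * of_real \<sigma> / 8)) \<and>
                 (finite_quadratic_form q2 \<and> refines q2 b \<and> quad_iso q2 (\<lambda>x. - q2 x) \<and>
                   tau1 q2 / of_real (cmod (tau1 q2)) = exp (2 * of_real pi * \<i> * of_real \<sigma> / 8))
                 \<longrightarrow> quad_iso q1 q2"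
proof (intro allI impI)
  fix q1 q2 :: "'a \<Rightarrow> rat"
  let ?E = "exp (2 * of_real pi * \<i> * of_real \<sigma> / 8)"
  assume H: "(finite_quadratic_form q1 \<and> refines q1 b \<and> quad_iso q1 (\<lambda>x. - q1 x) \<and>
                   tau1 q1 / of_real (cmod (tau1 q1)) = ?E) \<and>
                 (finite_quadratic_form q2 \<and> refines q2 b \<and> quad_iso q2 (\<lambda>x. - q2 x) \<and>
                   tau1 q2 / of_real (cmod (tau1 q2)) = ?E)"
  then have fq1: "finite_quadratic_form q1" and rq1: "refines q1 b"
    and ph1: "tau1 q1 / of_real (cmod (tau1 q1)) = ?E"
    and fq2: "finite_quadratic_form q2" and rq2: "refines q2 b"
    and ph2: "tau1 q2 / of_real (cmod (tau1 q2)) = ?E" by auto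
  have sbn: "sym_bilinear_nondeg b" using assms(1) by (simp add: finite_bilinear_form_def)
  have bs: "\<And>x y. b x y - b y x \<in> \<int>" and
       bl: "\<And>x y z. b (x + y) z - (b x z + b y z) \<in> \<int>" and
       bn: "\<And>x. (\<forall>y. b x y \<in> \<int>) \<Longrightarrow> x = 0"
    using sbn unfolding sym_bilinear_nondeg_def qz_eq_def by auto
  have r1: "\<And>x y. q1 (x + y) - q1 x - q1 y - b x y \<in> \<int>"
    using rq1 unfolding refines_def qz_eq_def assoc_bilinear_def by blast
  have r2: "\<And>x y. q2 (x + y) - q2 x - q2 y - b x y \<in> \<int>"
    using rq2 unfolding refines_def qz_eq_def assoc_bilinear_def by blast
  define d where "d x = q2 x - q1 x" for x
  have ad: "addqz d" unfolding addqz_def qz_eq_def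
  proof (intro allI)
    fix x y
    have "d (x + y) - (d x + d y) = (q2 (x + y) - q2 x - q2 y - b x y) - (q1 (x + y) - q1 x - q1 y - b x y)"
      by (simp add: d_def algebra_simps)
    then show "d (x + y) - (d x + d y) \<in> \<int>" using r1 r2 by (metis Ints_diff)
  qed
  have d2: "2 * d x \<in> \<int>" for x
  proof -
    have "2 * d x = (2 * q2 x - b x x) - (2 * q1 x - b x x)" by (simp add: d_def algebra_simps)
    then show ?thesis using quad_two[OF fq1 rq1] quad_two[OF fq2 rq2] by (metis Ints_diff)
  qed
  obtain c where c: "\<And>y. d y - b y c \<in> \<int>" using exists_c[OF sbn ad] unfolding qz_eq_def by blast
  have bc2: "2 * b x c \<in> \<int>" for x
  proof -
    have "2 * b x c = 2 * d x - 2 * (d x - b x c)" by (simp add: algebra_simps)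
    then show ?thesis using d2 c by (metis Ints_diff Ints_mult Ints_numeral)
  qed
  have cc: "c + c = 0"
  proof (rule bn, intro allI)
    fix y
    have "b (c + c) y = (b (c + c) y - (b c y + b c y)) + 2 * (b c y - b y c) + 2 * b y c"
      by (simp add: algebra_simps)
    then show "b (c + c) y \<in> \<int>" using bl bs bc2 by (metis Ints_add Ints_mult Ints_numeral)
  qed
  have q10: "q1 0 \<in> \<int>" using quad_zero[OF fq1] .
  have e2: "ee (q2 x) = ee (q1 (x + c)) * ee (- q1 c)" for x
  proof -
    have "q2 x - (q1 (x + c) + - q1 c) = (d x - b x c) - (q1 (x + c) - q1 x - q1 c - b x c)"
      by (simp add: d_def algebra_simps)
    then have "qz_eq (q2 x) (q1 (x + c) + - q1 c)" unfolding qz_eq_def using c r1 by (metis Ints_diff)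
    then show ?thesis by (metis ee_qz ee_add)
  qed
  have tau: "tau1 q2 = ee (- q1 c) * tau1 q1"
  proof -
    have "tau1 q2 = (\<Sum>x\<in>UNIV. ee (q1 (x + c))) * ee (- q1 c)"
      unfolding tau_ee by (simp add: e2 sum_distrib_right)
    also have "(\<Sum>x\<in>UNIV. ee (q1 (x + c))) = (\<Sum>x\<in>UNIV. ee (q1 x))"
      by (rule sum.reindex_bij_witness[of _ "\<lambda>y. y - c" "\<lambda>y. y + c"]) auto
    finally show ?thesis by (simp add: tau_ee mult.commute)
  qed
  have "?E = ee (- q1 c) * ?E"
  proof -
    have "?E = tau1 q2 / of_real (cmod (tau1 q2))" using ph2 by simp
    also have "\<dots> = ee (- q1 c) * (tau1 q1 / of_real (cmod (tau1 q1)))"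
      by (simp add: tau norm_mult ee_norm)
    also have "\<dots> = ee (- q1 c) * ?E" using ph1 by simp
    finally show ?thesis .
  qed
  then have "ee (- q1 c) = 1" by simp
  then have q1c: "q1 c \<in> \<int>" by (metis ee_one_iff Ints_minus minus_minus)
  have bcc: "b c c \<in> \<int>"
  proof -
    have "b c c = q1 0 - q1 c - q1 c - (q1 (c + c) - q1 c - q1 c - b c c)"
      using cc by simp
    then show ?thesis using q10 q1c r1 by (metis Ints_diff)
  qed
  define f where "f x = (if b x c \<in> \<int> then x else x + c)" for x
  have fadd: "f (x + y) = f x + f y" for x y
  proof -
    have bxy: "b (x + y) c - (b x c + b y c) \<in> \<int>" using bl by blast
    show ?thesis
    proof (cases "b x c \<in> \<int>"; cases "b y c \<in> \<int>")
      assume a: "b x c \<in> \<int>" "b y c \<in> \<int>"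
      then have "b (x + y) c \<in> \<int>" using bxy by (metis Ints_add diff_add_cancel)
      then show ?thesis using a by (simp add: f_def)
    next
      assume a: "b x c \<in> \<int>" "b y c \<notin> \<int>"
      have "b (x + y) c \<notin> \<int>"
      proof
        assume "b (x + y) c \<in> \<int>"
        moreover have "b y c = b (x + y) c - (b (x + y) c - (b x c + b y c)) - b x c" by simp
        ultimately show False using a bxy by (metis Ints_diff)
      qed
      then show ?thesis using a by (simp add: f_def algebra_simps)
    next
      assume a: "b x c \<notin> \<int>" "b y c \<in> \<int>"
      have "b (x + y) c \<notin> \<int>"
      proof
        assume "b (x + y) c \<in> \<int>"
        moreover have "b x c = b (x + y) c - (b (x + y) c - (b x c + b y c)) - b y c" by simp
        ultimately show False using a bxy by (metis Ints_diff)
      qed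
      then show ?thesis using a by (simp add: f_def algebra_simps)
    next
      assume a: "b x c \<notin> \<int>" "b y c \<notin> \<int>"
      have "b x c + b y c \<in> \<int>" using half_lemma[OF bc2 bc2 a] .
      then have "b (x + y) c \<in> \<int>" using bxy by (metis Ints_add diff_add_cancel)
      then have "f (x + y) = x + y" by (simp add: f_def)
      moreover have "f x + f y = x + c + (y + c)" using a by (simp add: f_def)
      moreover have "x + c + (y + c) = x + y" using cc by (metis add.assoc add.commute add.right_neutral)
      ultimately show ?thesis by simp
    qed
  qed
  have finv: "f (f x) = x" for x
  proof (cases "b x c \<in> \<int>")
    case True then show ?thesis by (simp add: f_def)
  next
    case False
    have "b (x + c) c \<notin> \<int>"
    proof
      assume "b (x + c) c \<in> \<int>"
      moreover have "b x c = b (x + c) c - (b (x + c) c - (b x c + b c c)) - b c c" by simp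
      ultimately show False using False bl bcc by (metis Ints_diff)
    qed
    moreover have "x + c + c = x" using cc by (simp add: add.assoc)
    ultimately show ?thesis using False by (simp add: f_def)
  qed
  have fq: "q2 (f x) - q1 x \<in> \<int>" for x
  proof (cases "b x c \<in> \<int>")
    case True
    have "q2 (f x) - q1 x = (d x - b x c) + b x c" using True by (simp add: f_def d_def)
    then show ?thesis using True c by (metis Ints_add)
  next
    case False
    have "q2 (f x) - q1 x = (d (x + c) - b (x + c) c) + (q1 (x + c) - q1 x - q1 c - b x c)
          + q1 c + 2 * b x c + (b (x + c) c - (b x c + b c c)) + b c c"
      using False by (simp add: f_def d_def algebra_simps)
    then show ?thesis using c r1 q1c bc2 bl bcc by (metis Ints_add)
  qed
  have "bij f" using finv by (metis o_bij comp_apply eq_id_iff)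
  then show "quad_iso q1 q2"
    unfolding quad_iso_def group_iso_def qz_eq_def using fadd fq by blast
qed

end
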